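(* Let $n\ge 2$ be an integer and let $n=n_0+n_1$ with integers $n_0\ge n_1\ge 1$. Then $(n_0,n_1)$ is a hypercubic bipartition (HCBP) of $n$ if and only if $f(n)=n_1+f(n_1)+f(n_0)$.
   Context: Let $f:\mathbb{N}\to\mathbb{N}_0$ be defined by $f(1)=0$ and $f(n)=\lfloor n/2\rfloor+f(\lfloor n/2\rfloor)+f(\lceil n/2\rceil)$ for $n>1$. For $k\ge 0$ and $0\le m<2^k$, let $\beta_k(m)\in\{0,1\}^k$ be the point whose $j$-th coordinate is the binary digit of $m$ of weight $2^{k-j}$ (so the last binary digit of $m$ is the $k$-th coordinate). For $n\ge 2$ put $k=\lceil \log_2 n\rceil$. A pair $(n_0,n_1)$ of integers with $n=n_0+n_1$ and $n_0\ge n_1\ge 1$ is a hypercubic bipartition (HCBP) of $n$ if there is $i\in\{1,\dots,k\}$ such that the hyperplane $x_i=1/2$ splits the $n$ points $\beta_k(0),\dots,\beta_k(n-1)$ into $n_0$ points on one side and $n_1$ points on the other (i.e. among these points, $n_0$ have one value of the $i$-th coordinate and $n_1$ have the other). *)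

theory Defs
  imports Complex_Main
begin

text \<open>The function f, with f(1) = 0 and
  f(n) = floor(n/2) + f(floor(n/2)) + f(ceil(n/2)) for n > 1.
  (The value at 0 is outside the paper's domain and set to 0.)\<close>
function f :: "nat \<Rightarrow> nat" where
  "f n = (if n \<le> 1 then 0 else n div 2 + f (n div 2) + f ((n + 1) div 2))"
  by auto
termination
  by (relation "measure id") auto

text \<open>j-th coordinate (1 \<le> j \<le> k) of beta_k(m): the binary digit of m of weight 2^(k-j).\<close>
definition beta :: "nat \<Rightarrow> nat \<Rightarrow> nat \<Rightarrow> nat" where
  "beta k m j = m div 2 ^ (k - j) mod 2"

definition clog2 :: "nat \<Rightarrow> nat" where
  "clog2 n = nat \<lceil>log 2 (real n)\<rceil>"

definition HCBP :: "nat \<Rightarrow> nat \<Rightarrow> nat \<Rightarrow> bool" where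
  "HCBP n n0 n1 \<longleftrightarrow> n = n0 + n1 \<and> n0 \<ge> n1 \<and> n1 \<ge> 1 \<and>
     (\<exists>i\<in>{1..clog2 n}.
        (card {m. m < n \<and> beta (clog2 n) m i = 0} = n0 \<and>
         card {m. m < n \<and> beta (clog2 n) m i = 1} = n1) \<or>
        (card {m. m < n \<and> beta (clog2 n) m i = 1} = n0 \<and>
         card {m. m < n \<and> beta (clog2 n) m i = 0} = n1))"

end

theory Submission
  imports Defs
begin

declare f.simps[simp del]

lemma par2: "\<exists>k::nat. n = 2*k \<or> n = 2*k+1" by presburger

lemma f0: "f 0 = 0" by (subst f.simps) simp
lemma f1: "f (Suc 0) = 0" by (subst f.simps) simp

lemma f_even: "f (2*k) = k + 2 * f k"
proof (cases "k = 0")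
  case True then show ?thesis by (simp add: f0)
next
  case False
  then show ?thesis by (subst f.simps) simp
qed

lemma f_odd: "f (2*k+1) = k + f k + f (k+1)"
proof (cases "k = 0")
  case True then show ?thesis by (simp add: f0 f1)
next
  case False
  then show ?thesis by (subst f.simps) simp
qed

lemma f_half: "f n = n div 2 + f (n div 2) + f (n - n div 2)"
proof -
  obtain k where "n = 2*k \<or> n = 2*k+1" using par2 by blast
  then show ?thesis
  proof
    assume n: "n = 2*k"
    have "n div 2 = k" "n - n div 2 = k" using n by simp_all
    then show ?thesis using n f_even[of k] by simp
  next
    assume n: "n = 2*k+1"
    have "n div 2 = k" "n - n div 2 = k + 1" using n by simp_all
    then show ?thesis using n f_odd[of k] by (simp only:)
  qed
qed

definition D :: "nat \<Rightarrow> nat \<Rightarrow> int" where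
  "D x y = int (f (x+y)) - int (f x) - int (f y) - int (min x y)"

lemma D_sym: "D x y = D y x"
  unfolding D_def by (simp add: add.commute min.commute)

lemma D_0: "D x 0 = 0"
  unfolding D_def by (simp add: f0)

lemma D_ee: "D (2*p) (2*q) = 2 * D p q"
proof -
  have a: "f (2*p+2*q) = (p+q) + 2 * f (p+q)" by (metis f_even add_mult_distrib2)
  show ?thesis unfolding D_def a f_even by (simp add: min_def)
qed

lemma D_oo: "D (2*p+1) (2*q+1) = D (p+1) q + D p (q+1) + (if p = q then 0 else 1)"
proof -
  have e: "2*p+1 + (2*q+1) = 2*(p+q+1)" by simp
  have e2: "p + 1 + q = p+q+1" "p + (q+1) = p+q+1" by simp_all
  show ?thesis unfolding D_def e e2 f_even f_odd by (simp add: min_def)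
qed

lemma D_eo: "D (2*p) (2*q+1) = D p q + D p (q+1)"
proof -
  have e: "2*p + (2*q+1) = 2*(p+q)+1" by simp
  have e2: "p + (q+1) = p+q+1" by simp
  show ?thesis unfolding D_def e e2 f_even f_odd by (simp add: min_def)
qed

lemmas D_eo' = D_eo[simplified]
lemmas D_oo' = D_oo[simplified]

lemma D_nonneg: "D x y \<ge> 0"
proof (induction "x+y" arbitrary: x y rule: less_induct)
  case less
  show ?case
  proof (cases "x = 0 \<or> y = 0")
    case True then show ?thesis by (metis D_0 D_sym order_refl)
  next
    case False
    obtain p where p: "x = 2*p \<or> x = 2*p+1" using par2 by blast
    obtain q where q: "y = 2*q \<or> y = 2*q+1" using par2 by blast
    show ?thesis
    proof (cases "x = 2*p")
      case xe: True
      show ?thesis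
      proof (cases "y = 2*q")
        case True
        then show ?thesis using xe False less[of p q] by (simp add: D_ee)
      next
        case ye: False
        then have "y = 2*q+1" using q by simp
        moreover have "D x y = D p q + D p (q+1)" using xe \<open>y = 2*q+1\<close> by (simp only: D_eo)
        ultimately show ?thesis using xe False less[of p q] less[of p "q+1"] by simp
      qed
    next
      case xo: False
      then have xo: "x = 2*p+1" using p by simp
      show ?thesis
      proof (cases "y = 2*q")
        case True
        moreover have "D y x = D q p + D q (p+1)" using xo True by (simp only: D_eo)
        ultimately show ?thesis using xo False less[of q p] less[of q "p+1"] D_sym[of x y]
          by simp
      next
        case ye: False
        then have "y = 2*q+1" using q by simp
        moreover have "D x y = D (p+1) q + D p (q+1) + (if p = q then 0 else 1)" using xo \<open>y = 2*q+1\<close> by (simp only: D_oo)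
        ultimately show ?thesis using xo False less[of "p+1" q] less[of p "q+1"] by simp
      qed
    qed
  qed
qed

definition bt :: "nat \<Rightarrow> nat \<Rightarrow> nat" where "bt j x = x div 2^j mod 2"
definition cnt :: "nat \<Rightarrow> nat \<Rightarrow> nat" where "cnt j n = card {x. x < n \<and> bt j x = 1}"

lemma cnt_0n[simp]: "cnt j 0 = 0" unfolding cnt_def by simp

lemma cnt_Suc: "cnt j (Suc n) = cnt j n + bt j n"
proof -
  have b: "bt j n = 0 \<or> bt j n = 1" unfolding bt_def by auto
  show ?thesis
  proof (cases "bt j n = 1")
    case True
    then have "{x. x < Suc n \<and> bt j x = 1} = insert n {x. x < n \<and> bt j x = 1}" by auto
    then show ?thesis using True unfolding cnt_def by simp
  next
    case False
    then have "{x. x < Suc n \<and> bt j x = 1} = {x. x < n \<and> bt j x = 1}" using less_Suc_eq by auto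
    then show ?thesis using False b unfolding cnt_def by simp
  qed
qed

lemma bt_le: "bt j n \<le> 1" unfolding bt_def by simp

lemma cnt_le: "cnt j n \<le> n"
proof (induction n)
  case (Suc n) then show ?case using bt_le[of j n] by (simp add: cnt_Suc)
qed simp

lemma cnt_0: "cnt 0 n = n div 2"
proof (induction n)
  case 0 then show ?case by simp
next
  case (Suc n) then show ?case by (simp add: cnt_Suc bt_def) presburger
qed

lemma bt_Suc: "bt (Suc j) n = bt j (n div 2)"
  unfolding bt_def by (simp add: div_mult2_eq)

lemma cnt_rec: "cnt (Suc j) n = cnt j (n div 2) + cnt j ((n+1) div 2)"
proof (induction n)
  case 0 then show ?case by simp
next
  case (Suc n)
  obtain k where "n = 2*k \<or> n = 2*k+1" using par2 by blast
  then show ?case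
  proof
    assume n: "n = 2*k"
    have "Suc n div 2 = k" "(Suc n + 1) div 2 = Suc k" "n div 2 = k" "(n+1) div 2 = k" using n by simp_all
    then show ?thesis using Suc by (simp add: cnt_Suc bt_Suc)
  next
    assume n: "n = 2*k+1"
    have "Suc n div 2 = Suc k" "(Suc n + 1) div 2 = Suc k" "n div 2 = k" "(n+1) div 2 = Suc k" using n by simp_all
    then show ?thesis using Suc by (simp add: cnt_Suc bt_Suc)
  qed
qed

lemma cnt_big: "n \<le> 2^j \<Longrightarrow> cnt j n = 0"
proof (induction n)
  case 0 then show ?case by simp
next
  case (Suc n)
  then have "bt j n = 0" unfolding bt_def by simp
  then show ?case using Suc by (simp add: cnt_Suc)
qed

definition aa :: "nat \<Rightarrow> nat \<Rightarrow> nat" where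
  "aa j n = (if bt j n = 1 then cnt j n else n - cnt j n)"

lemma aa_0: "aa 0 n = n div 2"
  unfolding aa_def by (simp add: cnt_0 bt_def) presburger

lemma aa_Suc: "aa (Suc j) n = 2 * aa j (n div 2) + n mod 2"
proof -
  obtain k where "n = 2*k \<or> n = 2*k+1" using par2 by blast
  have b: "bt j k = 0 \<or> bt j k = 1" unfolding bt_def by auto
  have le: "cnt j k \<le> k" by (rule cnt_le)
  show ?thesis
  proof (cases "n = 2*k")
    case True
    then show ?thesis using b le unfolding aa_def by (auto simp: bt_Suc cnt_rec)
  next
    case False
    then have n: "n = 2*k+1" using \<open>n = 2*k \<or> n = 2*k+1\<close> by simp
    have "(n+1) div 2 = Suc k" "n div 2 = k" using n by simp_all
    then show ?thesis using b le n unfolding aa_def by (auto simp: bt_Suc cnt_rec cnt_Suc)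
  qed
qed

definition Cset :: "nat \<Rightarrow> nat \<Rightarrow> bool" where
  "Cset n x \<longleftrightarrow> (\<exists>j. cnt j n = x \<or> n - cnt j n = x)"

lemma Cset_compl: "x \<le> n \<Longrightarrow> Cset n x \<Longrightarrow> Cset n (n - x)"
proof -
  assume x: "x \<le> n" and "Cset n x"
  then obtain j where "cnt j n = x \<or> n - cnt j n = x" unfolding Cset_def by blast
  moreover have "cnt j n \<le> n" by (rule cnt_le)
  ultimately have "cnt j n = n - x \<or> n - cnt j n = n - x" using x by linarith
  then show ?thesis unfolding Cset_def by blast
qed

lemma Cset_aa1: "(cnt j n = x \<or> n - cnt j n = x) \<longleftrightarrow> (aa j n = x \<or> n - aa j n = x)"
proof -
  have "cnt j n \<le> n" by (rule cnt_le)
  then show ?thesis unfolding aa_def by (cases "bt j n = 1") auto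
qed

lemma Cset_aa: "Cset n x \<longleftrightarrow> (\<exists>j. aa j n = x \<or> n - aa j n = x)"
  unfolding Cset_def using Cset_aa1 by blast

lemma cnt_step: "(cnt j (n+1) = aa j n + 1 \<and> n+1 - cnt j (n+1) = n - aa j n) \<or>
                 (cnt j (n+1) = n - aa j n \<and> n+1 - cnt j (n+1) = aa j n + 1)"
proof -
  have b: "bt j n = 0 \<or> bt j n = 1" unfolding bt_def by auto
  have "cnt j n \<le> n" by (rule cnt_le)
  then show ?thesis using b unfolding aa_def by (auto simp: cnt_Suc)
qed

lemma CZ: "D (cnt j n) (n - cnt j n) = 0"
proof (induction j arbitrary: n)
  case 0
  have "D (n div 2) (n - n div 2) = 0" unfolding D_def using f_half[of n] by simp
  then show ?case by (simp add: cnt_0)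
next
  case (Suc j)
  obtain k where kk: "n = 2*k \<or> n = 2*k+1" using par2 by blast
  define X where "X = cnt j k"
  define Y where "Y = k - X"
  have le: "X \<le> k" unfolding X_def by (rule cnt_le)
  have IH1: "D X Y = 0" unfolding X_def Y_def by (rule Suc)
  have IH2: "D (cnt j (k+1)) (k + 1 - cnt j (k+1)) = 0" by (rule Suc)
  show ?case
  proof (cases "n = 2*k")
    case True
    then have "cnt (Suc j) n = 2 * X" "n - cnt (Suc j) n = 2 * Y"
      using le unfolding X_def Y_def by (simp_all add: cnt_rec)
    then have "D (cnt (Suc j) n) (n - cnt (Suc j) n) = D (2*X) (2*Y)" by simp
    also have "\<dots> = 2 * D X Y" by (rule D_ee)
    finally show ?thesis using IH1 by simp
  next
    case False
    then have n: "n = 2*k+1" using kk by simp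
    have b: "bt j k = 0 \<or> bt j k = 1" unfolding bt_def by auto
    have c: "cnt (Suc j) n = X + cnt j (k+1)" using n unfolding X_def by (simp add: cnt_rec)
    show ?thesis
    proof (cases "bt j k = 0")
      case True
      then have e: "cnt j (k+1) = X" unfolding X_def by (simp add: cnt_Suc)
      have "cnt (Suc j) n = 2 * X" "n - cnt (Suc j) n = 2 * Y + 1"
        using c e n le unfolding Y_def by simp_all
      then have "D (cnt (Suc j) n) (n - cnt (Suc j) n) = D (2*X) (2*Y+1)" by simp
      also have "\<dots> = D X Y + D X (Y+1)" by (rule D_eo)
      also have "D X (Y+1) = 0" using IH2 e le unfolding Y_def by (simp add: Suc_diff_le)
      finally show ?thesis using IH1 by simp
    next
      case False
      then have e: "cnt j (k+1) = X + 1" using b unfolding X_def by (simp add: cnt_Suc)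
      have "cnt (Suc j) n = 2 * X + 1" "n - cnt (Suc j) n = 2 * Y"
        using c e n le unfolding Y_def by simp_all
      then have "D (cnt (Suc j) n) (n - cnt (Suc j) n) = D (2*X+1) (2*Y)" by simp
      also have "\<dots> = D (2*Y) (2*X+1)" by (rule D_sym)
      also have "\<dots> = D Y X + D Y (X+1)" by (rule D_eo)
      also have "D Y X = D X Y" by (rule D_sym)
      also have "D Y (X+1) = D (X+1) Y" by (rule D_sym)
      also have "D (X+1) Y = 0" using IH2 e le unfolding Y_def by simp
      finally show ?thesis using IH1 by simp
    qed
  qed
qed

lemma aa_par: "aa (Suc i) m \<noteq> aa (Suc j) m + 1"
  unfolding aa_Suc by presburger

lemma Hlem:
  assumes m: "m = p + q" and h1: "Cset m p" and h2: "Cset (m+1) p"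
  shows "Cset (2*m+1) (2*p)"
proof -
  have good0: "Cset (2*m+1) (2*p)" if "m = 2*p \<or> m = 2*q+1"
    using that m unfolding Cset_def by (intro exI[of _ 0]) (auto simp: cnt_0)
  have good1: "Cset (2*m+1) (2*p)" if "aa j m = q" for j
  proof -
    have "aa (Suc j) (2*m+1) = 2*q+1" using that by (simp add: aa_Suc)
    then show ?thesis unfolding Cset_aa using m by (intro exI[of _ "Suc j"]) simp
  qed
  show ?thesis
  proof (cases "\<exists>j. aa j m = q")
    case True then show ?thesis using good1 by blast
  next
    case nq: False
    from h1 obtain j1 where "aa j1 m = p \<or> m - aa j1 m = p" unfolding Cset_aa by blast
    moreover have "aa j1 m \<le> m" unfolding aa_def using cnt_le by auto
    moreover have "m - aa j1 m \<noteq> p"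
    proof
      assume "m - aa j1 m = p"
      then have "aa j1 m = q" using \<open>aa j1 m \<le> m\<close> m by linarith
      then show False using nq by blast
    qed
    ultimately have j1: "aa j1 m = p" by blast
    from h2 obtain j2 where "cnt j2 (m+1) = p \<or> m + 1 - cnt j2 (m+1) = p" unfolding Cset_def by blast
    moreover have "aa j2 m \<le> m" unfolding aa_def using cnt_le by auto
    moreover note cnt_step[of j2 m]
    ultimately have "aa j2 m + 1 = p \<or> m - aa j2 m = p" by auto
    moreover have "m - aa j2 m \<noteq> p"
    proof
      assume "m - aa j2 m = p"
      then have "aa j2 m = q" using \<open>aa j2 m \<le> m\<close> m by linarith
      then show False using nq by blast
    qed
    ultimately have j2: "aa j2 m + 1 = p" by blast
    show ?thesis
    proof (cases j1)
      case 0
      then have md: "m div 2 = p" using j1 by (simp add: aa_0)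
      show ?thesis
      proof (cases "m = 2*p")
        case True then show ?thesis using good0 by blast
      next
        case False
        then have mo: "m = 2*p+1" using md by presburger
        have "j2 \<noteq> 0"
        proof
          assume "j2 = 0"
          then have "aa j2 m = p" using md by (simp add: aa_0)
          then show False using j2 by simp
        qed
        then obtain j' where "j2 = Suc j'" using not0_implies_Suc by blast
        then have "2 * aa j' (m div 2) + 1 + 1 = p" using j2 mo by (simp add: aa_Suc)
        then have pe: "p mod 2 = 0" by presburger
        have "aa (Suc 0) m = 2 * (p div 2) + 1" using mo md by (simp add: aa_Suc aa_0)
        also have "\<dots> = q" using pe mo m by presburger
        finally show ?thesis using good1 by blast
      qed
    next
      case (Suc j')
      show ?thesis
      proof (cases j2)
        case (Suc j'') then show ?thesis using aa_par j1 j2 \<open>j1 = Suc j'\<close> by metis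
      next
        case 0
        then have md: "m div 2 + 1 = p" using j2 by (simp add: aa_0)
        show ?thesis
        proof (cases "m = 2*q+1")
          case True then show ?thesis using good0 by blast
        next
          case False
          then have me: "m mod 2 = 0" using md m by presburger
          have "2 * aa j' (m div 2) + m mod 2 = p" using j1 \<open>j1 = Suc j'\<close> by (simp add: aa_Suc)
          then have pe: "p mod 2 = 0" using me by presburger
          have "aa (Suc 0) m = 2 * ((m div 2) div 2)" using me by (simp add: aa_Suc aa_0)
          also have "\<dots> = q" using pe md me m by presburger
          finally show ?thesis using good1 by blast
        qed
      qed
    qed
  qed
qed

lemma ZC: "D x y = 0 \<Longrightarrow> Cset (x+y) x"
proof (induction "x+y" arbitrary: x y rule: less_induct)
  case less
  show ?case
  proof (cases "x = 0 \<or> y = 0")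
    case True
    have "cnt (x+y) (x+y) = 0" by (rule cnt_big) (simp add: less_imp_le)
    then show ?thesis using True unfolding Cset_def by (intro exI[of _ "x+y"]) auto
  next
    case False
    obtain p where p: "x = 2*p \<or> x = 2*p+1" using par2 by blast
    obtain q where q: "y = 2*q \<or> y = 2*q+1" using par2 by blast
    have nn: "\<And>a b. D a b \<ge> 0" by (rule D_nonneg)
    have eo: "Cset (2*(a+b)+1) (2*a)" if "D (2*a) (2*b+1) = 0" "2*a + (2*b+1) = x + y" "a > 0" for a b
    proof -
      have "D a b + D a (b+1) = 0" using that D_eo by simp
      then have "D a b = 0" "D a (b+1) = 0" using nn[of a b] nn[of a "b+1"] by linarith+
      moreover have "a+b < x+y" "a+(b+1) < x+y" using that by simp_all
      ultimately have "Cset (a+b) a" "Cset (a+(b+1)) a" using less(1) by blast+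
      then show ?thesis using Hlem[of "a+b" a b] by simp
    qed
    show ?thesis
    proof (cases "x = 2*p")
      case xe: True
      show ?thesis
      proof (cases "y = 2*q")
        case True
        have "D p q = 0" using less xe True by (simp add: D_ee)
        then have "Cset (p+q) p" using less xe True False by simp
        then obtain j where "aa j (p+q) = p \<or> p + q - aa j (p+q) = p" unfolding Cset_aa by blast
        moreover have "aa (Suc j) (2*(p+q)) = 2 * aa j (p+q)" by (simp add: aa_Suc)
        ultimately have "aa (Suc j) (x+y) = x \<or> x+y - aa (Suc j) (x+y) = x"
          using xe True by (auto simp: algebra_simps)
        then show ?thesis unfolding Cset_aa by blast
      next
        case False
        then have ye: "y = 2*q+1" using q by simp
        have "Cset (2*(p+q)+1) (2*p)" using eo[of p q] less xe ye \<open>\<not>(x = 0 \<or> y = 0)\<close> by simp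
        then show ?thesis using xe ye by (simp add: algebra_simps)
      qed
    next
      case False
      then have xo: "x = 2*p+1" using p by simp
      show ?thesis
      proof (cases "y = 2*q")
        case ye: True
        have "D y x = 0" using less D_sym by simp
        then have "Cset (2*(q+p)+1) (2*q)" using eo[of q p] xo ye \<open>\<not>(x = 0 \<or> y = 0)\<close> by simp
        then have "Cset (2*(q+p)+1) (2*(q+p)+1 - 2*q)" by (rule Cset_compl[rotated]) simp
        then show ?thesis using xo ye by (simp add: algebra_simps)
      next
        case False
        then have yo: "y = 2*q+1" using q by simp
        have "D (p+1) q + D p (q+1) + (if p = q then 0 else 1) = 0" using less xo yo D_oo by simp
        then have pq: "p = q" using nn[of "p+1" q] nn[of p "q+1"] by (auto split: if_splits)
        have "cnt 0 (x+y) = x" using xo yo pq by (simp add: cnt_0)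
        then show ?thesis unfolding Cset_def by blast
      qed
    qed
  qed
qed

lemma clog2_big: "n \<ge> 1 \<Longrightarrow> n \<le> 2 ^ clog2 n"
proof -
  assume n: "n \<ge> 1"
  have l0: "log 2 (real n) \<ge> 0" using n by simp
  have "real n = 2 powr (log 2 (real n))" using n by simp
  also have "\<dots> \<le> 2 powr (real_of_int \<lceil>log 2 (real n)\<rceil>)" by (simp add: le_of_int_ceiling)
  also have "\<dots> = 2 powr (real (clog2 n))" unfolding clog2_def using l0 by simp
  also have "\<dots> = real (2 ^ clog2 n)" by (simp add: powr_realpow)
  finally show ?thesis by linarith
qed

lemma card_zero: "card {m. m < n \<and> bt j m = 0} = n - cnt j n"
proof -
  have "{m. m < n \<and> bt j m = 0} = {..<n} - {x. x < n \<and> bt j x = 1}"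
    unfolding bt_def by auto
  then have "card {m. m < n \<and> bt j m = 0} = card ({..<n} - {x. x < n \<and> bt j x = 1})" by simp
  also have "\<dots> = card {..<n} - card {x. x < n \<and> bt j x = 1}" by (rule card_Diff_subset) auto
  finally show ?thesis unfolding cnt_def by simp
qed

lemma HCBP_iff:
  assumes "n = n0 + n1" "n0 \<ge> n1" "n1 \<ge> 1"
  shows "HCBP n n0 n1 \<longleftrightarrow> Cset n n1"
proof -
  let ?k = "clog2 n"
  have beta: "beta ?k m i = bt (?k - i) m" for m i unfolding beta_def bt_def by simp
  have cards: "card {m. m < n \<and> beta ?k m i = 1} = cnt (?k - i) n"
              "card {m. m < n \<and> beta ?k m i = 0} = n - cnt (?k - i) n" for i
    unfolding beta cnt_def card_zero by simp_all
  have le: "cnt j n \<le> n" for j by (rule cnt_le)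
  have eqv: "(card {m. m < n \<and> beta ?k m i = 0} = n0 \<and> card {m. m < n \<and> beta ?k m i = 1} = n1 \<or>
         card {m. m < n \<and> beta ?k m i = 1} = n0 \<and> card {m. m < n \<and> beta ?k m i = 0} = n1)
        \<longleftrightarrow> (cnt (?k - i) n = n1 \<or> cnt (?k - i) n = n0)" for i
    unfolding cards using assms(1) le[of "?k - i"] by linarith
  have "HCBP n n0 n1 \<longleftrightarrow> (\<exists>i\<in>{1..?k}. cnt (?k - i) n = n1 \<or> cnt (?k - i) n = n0)"
    unfolding HCBP_def eqv using assms by blast
  also have "\<dots> \<longleftrightarrow> (\<exists>j. cnt j n = n1 \<or> cnt j n = n0)"
  proof
    assume "\<exists>i\<in>{1..?k}. cnt (?k - i) n = n1 \<or> cnt (?k - i) n = n0" then show "\<exists>j. cnt j n = n1 \<or> cnt j n = n0" by blast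
  next
    assume "\<exists>j. cnt j n = n1 \<or> cnt j n = n0"
    then obtain j where j: "cnt j n = n1 \<or> cnt j n = n0" by blast
    have "j < ?k"
    proof (rule ccontr)
      assume "\<not> j < ?k"
      then have "(2::nat)^?k \<le> 2^j" by (simp add: power_increasing)
      then have "n \<le> 2^j" using clog2_big[of n] assms by linarith
      then show False using cnt_big[of n j] j assms by simp
    qed
    then show "\<exists>i\<in>{1..?k}. cnt (?k - i) n = n1 \<or> cnt (?k - i) n = n0"
      using j by (intro bexI[of _ "?k - j"]) auto
  qed
  also have "\<dots> \<longleftrightarrow> Cset n n1"
  proof -
    have "(cnt j n = n1 \<or> cnt j n = n0) \<longleftrightarrow> (cnt j n = n1 \<or> n - cnt j n = n1)" for j
      using assms(1) le[of j] by linarith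
    then show ?thesis unfolding Cset_def by blast
  qed
  finally show ?thesis .
qed

theorem theorem6:
  fixes n n0 n1 :: nat
  assumes "n \<ge> 2" and "n = n0 + n1" and "n0 \<ge> n1" and "n1 \<ge> 1"
  shows "HCBP n n0 n1 \<longleftrightarrow> f n = n1 + f n1 + f n0"
proof -
  have e: "n1 + n0 = n0 + n1" by simp
  have "f n = n1 + f n1 + f n0 \<longleftrightarrow> D n1 n0 = 0"
    unfolding D_def e using assms by (auto simp: min_def)
  also have "\<dots> \<longleftrightarrow> Cset n n1"
  proof
    assume "D n1 n0 = 0"
    then have "Cset (n1 + n0) n1" by (rule ZC)
    moreover have "n = n1 + n0" using assms by simp
    ultimately show "Cset n n1" by simp
  next
    assume "Cset n n1"
    then obtain j where "cnt j n = n1 \<or> n - cnt j n = n1" unfolding Cset_def by blast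
    then show "D n1 n0 = 0"
    proof
      assume "cnt j n = n1" then show ?thesis using CZ[of j n] assms by simp
    next
      assume a: "n - cnt j n = n1"
      then have "cnt j n = n0" using assms cnt_le[of j n] by simp
      then show ?thesis using CZ[of j n] a D_sym by simp
    qed
  qed
  also have "\<dots> \<longleftrightarrow> HCBP n n0 n1" using HCBP_iff assms by simp
  finally show ?thesis by simp
qed

end
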